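(* Let $n\ge2$ and consider an equation $\sum_{i,j=1}^n f_{ij}({\bf p})u_{x_ix_j}=0$, $p^i=u_{x_i}$, with $(f_{ij})$ symmetric and nondegenerate, with inverse $(f^{ij})$. Define $$s_k=\frac{f^{ij}}{(n+2)(1-n)}\left(\partial_kf_{ij}-n\,\partial_jf_{ik}\right),\qquad c_k=\frac{f^{ij}}{(n+2)(n-1)}\left((n+3)\partial_kf_{ij}-2(n+1)\partial_jf_{ik}\right),$$ $$a_{ijk}=\partial_kf_{ij}-(c_k+2s_k)f_{ij}-s_if_{kj}-s_jf_{ki},$$ where $\partial_k=\partial/\partial p^k$ and repeated indices are summed. The equation is linearizable by a transformation from the equivalence group $SL(n+1,\mathbb{R})$ if and only if (1) $a_{ijk}=0$ identically, and (2) $\partial_js_i-s_is_j=0$ for all $i,j$ (equivalently, the connection with Christoffel symbols $\Gamma^i_{jk}=s_j\delta^i_k+s_k\delta^i_j$ is flat).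
   Context: The equivalence group consists of transformations $\tilde{\bf x}=C{\bf x}+bu$, $\tilde u=c{\bf x}+\beta u$ with the corresponding $(n+1)\times(n+1)$ matrix in $SL(n+1,\mathbb{R})$; they act on the row vector ${\bf p}=(p^1,\dots,p^n)$ projectively by $\tilde{\bf p}=\kappa{\bf p}C^{-1}+cC^{-1}$, $\kappa=1/\det(C+b{\bf p})$, and on $F=(f_{ij})$ by $\tilde F=\kappa^{-1}(C+b{\bf p})F(C+b{\bf p})^t$. Linearizable means that the transformed coefficient matrix is proportional (by a function) to a constant matrix. *)

theory Defs
  imports "HOL-Analysis.Analysis"
begin

definition pd :: "'n::finite \<Rightarrow> (real^'n \<Rightarrow> real) \<Rightarrow> real^'n \<Rightarrow> real" where
  "pd k g p = frechet_derivative g (at p) (axis k 1)"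

fun Ck_on :: "nat \<Rightarrow> (real^'n::finite) set \<Rightarrow> (real^'n \<Rightarrow> real) \<Rightarrow> bool" where
  "Ck_on 0 U g = continuous_on U g"
| "Ck_on (Suc k) U g = ((\<forall>p\<in>U. g differentiable (at p)) \<and> (\<forall>i. Ck_on k U (pd i g)))"

definition smooth_on :: "(real^'n::finite) set \<Rightarrow> (real^'n \<Rightarrow> real) \<Rightarrow> bool" where
  "smooth_on U g = (\<forall>k. Ck_on k U g)"

definition ent :: "(real^'n \<Rightarrow> real^'n^'n) \<Rightarrow> 'n::finite \<Rightarrow> 'n \<Rightarrow> real^'n \<Rightarrow> real" where
  "ent F i j = (\<lambda>q. F q $ i $ j)"

definition s_coef :: "(real^'n \<Rightarrow> real^'n^'n) \<Rightarrow> 'n::finite \<Rightarrow> real^'n \<Rightarrow> real" where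
  "s_coef F k p = (let n = real CARD('n); Fi = matrix_inv (F p) in
     (\<Sum>i\<in>UNIV. \<Sum>j\<in>UNIV. Fi $ i $ j *
        (pd k (ent F i j) p - n * pd j (ent F i k) p)) / ((n + 2) * (1 - n)))"

definition c_coef :: "(real^'n \<Rightarrow> real^'n^'n) \<Rightarrow> 'n::finite \<Rightarrow> real^'n \<Rightarrow> real" where
  "c_coef F k p = (let n = real CARD('n); Fi = matrix_inv (F p) in
     (\<Sum>i\<in>UNIV. \<Sum>j\<in>UNIV. Fi $ i $ j *
        ((n + 3) * pd k (ent F i j) p - 2 * (n + 1) * pd j (ent F i k) p)) / ((n + 2) * (n - 1)))"

definition a_coef :: "(real^'n \<Rightarrow> real^'n^'n) \<Rightarrow> 'n::finite \<Rightarrow> 'n \<Rightarrow> 'n \<Rightarrow> real^'n \<Rightarrow> real" where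
  "a_coef F i j k p = pd k (ent F i j) p - (c_coef F k p + 2 * s_coef F k p) * F p $ i $ j
      - s_coef F i p * F p $ k $ j - s_coef F j p * F p $ k $ i"

text \<open>The (n+1)x(n+1) matrix [[C, b],[c, beta]] of the point transformation
  x~ = C x + b u, u~ = c x + beta u; index set 'n + unit (the extra index is u).\<close>
definition block_mat :: "real^'n^'n \<Rightarrow> real^'n \<Rightarrow> real^'n \<Rightarrow> real \<Rightarrow> real^('n::finite + unit)^('n + unit)" where
  "block_mat C b c \<beta> = (\<chi> r s. case r of
       Inl i \<Rightarrow> (case s of Inl j \<Rightarrow> C $ i $ j | Inr _ \<Rightarrow> b $ i)
     | Inr _ \<Rightarrow> (case s of Inl j \<Rightarrow> c $ j | Inr _ \<Rightarrow> \<beta>))"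

definition Cbp :: "real^'n^'n \<Rightarrow> real^'n \<Rightarrow> real^'n::finite \<Rightarrow> real^'n^'n" where
  "Cbp C b p = C + (\<chi> i j. b $ i * p $ j)"

definition transformed_coef :: "real^'n^'n \<Rightarrow> real^'n \<Rightarrow> (real^'n \<Rightarrow> real^'n^'n) \<Rightarrow> real^'n::finite \<Rightarrow> real^'n^'n" where
  "transformed_coef C b F p = det (Cbp C b p) *\<^sub>R (Cbp C b p ** F p ** transpose (Cbp C b p))"

definition linearizable_at :: "(real^'n \<Rightarrow> real^'n^'n) \<Rightarrow> (real^'n::finite) set \<Rightarrow> real^'n \<Rightarrow> bool" where
  "linearizable_at F U p0 = (\<exists>V C b c \<beta> (lam :: real^'n \<Rightarrow> real) (K :: real^'n^'n).
      open V \<and> p0 \<in> V \<and> V \<subseteq> U \<and> det (block_mat C b c \<beta>) = 1 \<and>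
      (\<forall>p\<in>V. det (Cbp C b p) \<noteq> 0 \<and> transformed_coef C b F p = lam p *\<^sub>R K))"

end

theory Submission
  imports Defs
begin

lemma pd_has: "(f has_derivative f') (at p) \<Longrightarrow> pd k f p = f' (axis k 1)"
  unfolding pd_def using frechet_derivative_at by metis

lemma lin_expand:
  fixes L :: "real^'n::finite \<Rightarrow> real"
  assumes "linear L"
  shows "L h = (\<Sum>k\<in>UNIV. h$k * L (axis k 1))"
proof -
  have "L h = L (\<Sum>k\<in>UNIV. h$k *\<^sub>R axis k 1)"
    using basis_expansion[of h] by (simp add: scalar_mult_eq_scaleR)
  also have "\<dots> = (\<Sum>k\<in>UNIV. h$k * L (axis k 1))"
    using assms by (simp add: linear_sum linear_scale)
  finally show ?thesis .
qed

lemma has_pd: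
  fixes f :: "real^'n::finite \<Rightarrow> real"
  assumes "f differentiable (at p)"
  shows "(f has_derivative (\<lambda>h. \<Sum>k\<in>UNIV. h$k * pd k f p)) (at p)"
proof -
  have d: "(f has_derivative frechet_derivative f (at p)) (at p)"
    using assms frechet_derivative_works by blast
  then have "linear (frechet_derivative f (at p))"
    using has_derivative_linear by blast
  then have "frechet_derivative f (at p) = (\<lambda>h. \<Sum>k\<in>UNIV. h$k * pd k f p)"
    unfolding pd_def by (intro ext lin_expand)
  with d show ?thesis by simp
qed

lemma sum_axis[simp]: "(\<Sum>j\<in>UNIV. (axis k (1::real) :: real^'n::finite) $ j * x j) = x k"
  proof -
  have "(\<Sum>j\<in>UNIV. (axis k (1::real) :: real^'n) $ j * x j) = (\<Sum>j\<in>UNIV. if j = k then x j else 0)"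
    by (rule sum.cong) (auto simp: axis_def)
  then show ?thesis by simp
qed

lemma pd_add: "f differentiable (at p) \<Longrightarrow> g differentiable (at p) \<Longrightarrow>
  pd k (\<lambda>q. f q + g q) p = pd k f p + pd k g p"
  using pd_has[OF has_derivative_add[OF has_pd has_pd]] by simp

lemma pd_diff: "f differentiable (at p) \<Longrightarrow> g differentiable (at p) \<Longrightarrow>
  pd k (\<lambda>q. f q - g q) p = pd k f p - pd k g p"
  using pd_has[OF has_derivative_diff[OF has_pd has_pd]] by simp

lemma pd_mult: "f differentiable (at p) \<Longrightarrow> g differentiable (at p) \<Longrightarrow>
  pd k (\<lambda>q. f q * g q) p = f p * pd k g p + pd k f p * g p"
  using pd_has[OF has_derivative_mult[OF has_pd has_pd]] by simp

lemma pd_const[simp]: "pd k (\<lambda>q. c) p = 0"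
proof -
  have "((\<lambda>q. c) has_derivative (\<lambda>h. 0)) (at p)" by simp
  from pd_has[OF this] show ?thesis by simp
qed

lemma pd_cmult: "f differentiable (at p) \<Longrightarrow> pd k (\<lambda>q. c * f q) p = c * pd k f p"
  using pd_mult[of "\<lambda>q. c" p f k] by simp

lemma pd_nth: "pd k (\<lambda>q. q $ j) p = (if j = k then 1 else 0)"
  using pd_has[OF bounded_linear_imp_has_derivative[OF bounded_linear_vec_nth[of j]]]
  by (simp add: axis_def)

lemma pd_sum: "finite I \<Longrightarrow> (\<And>i. i \<in> I \<Longrightarrow> f i differentiable (at p)) \<Longrightarrow>
  pd k (\<lambda>q. \<Sum>i\<in>I. f i q) p = (\<Sum>i\<in>I. pd k (f i) p)"
proof -
  assume a: "\<And>i. i \<in> I \<Longrightarrow> f i differentiable (at p)"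
  have "((\<lambda>q. \<Sum>i\<in>I. f i q) has_derivative (\<lambda>h. \<Sum>i\<in>I. \<Sum>k\<in>UNIV. h$k * pd k (f i) p)) (at p)"
    by (rule has_derivative_sum) (rule has_pd, rule a)
  from pd_has[OF this] show ?thesis by simp
qed

lemma pd_local:
  assumes "open V" "p \<in> V" "\<And>q. q \<in> V \<Longrightarrow> f q = g q" "f differentiable (at p)"
  shows "pd k g p = pd k f p"
proof -
  have "(g has_derivative (\<lambda>h. \<Sum>k\<in>UNIV. h$k * pd k f p)) (at p)"
    by (rule has_derivative_transform_within_open[OF has_pd[OF assms(4)] assms(1,2)]) (use assms(3) in auto)
  from pd_has[OF this] show ?thesis by simp
qed

lemma diff_local:
  fixes f g :: "real^'n::finite \<Rightarrow> real"
  assumes "open V" "p \<in> V" "\<And>q. q \<in> V \<Longrightarrow> f q = g q" "f differentiable (at p)"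
  shows "g differentiable (at p)"
  unfolding differentiable_def
  by (rule exI, rule has_derivative_transform_within_open[OF has_pd[OF assms(4)] assms(1,2)]) (use assms(3) in auto)

lemma differentiable_prod':
  fixes f :: "'i \<Rightarrow> real^'n::finite \<Rightarrow> real"
  shows "(\<And>i. i \<in> I \<Longrightarrow> f i differentiable (at p)) \<Longrightarrow> (\<lambda>q. \<Prod>i\<in>I. f i q) differentiable (at p)"
proof -
  assume a: "\<And>i. i \<in> I \<Longrightarrow> f i differentiable (at p)"
  then have "\<forall>i\<in>I. \<exists>f'. (f i has_derivative f') (at p)" unfolding differentiable_def by blast
  then obtain f' where "\<forall>i\<in>I. (f i has_derivative f' i) (at p)" by (rule bchoice[elim_format]) blast
  then have "((\<lambda>q. \<Prod>i\<in>I. f i q) has_derivative (\<lambda>y. \<Sum>i\<in>I. f' i y * (\<Prod>j\<in>I - {i}. f j p))) (at p)"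
    by (intro has_derivative_prod) auto
  then show ?thesis unfolding differentiable_def by blast
qed

lemma diff_nth[simp]: "(\<lambda>q. q $ j) differentiable (at p)"
  using bounded_linear_vec_nth bounded_linear_imp_differentiable by blast

lemma det_differentiable:
  fixes A :: "real^'n::finite \<Rightarrow> real^'m::finite^'m"
  assumes "\<And>i j. (\<lambda>q. A q $ i $ j) differentiable (at p)"
  shows "(\<lambda>q. det (A q)) differentiable (at p)"
  unfolding det_def
proof (rule differentiable_sum, simp, rule ballI)
  fix \<pi> show "(\<lambda>q. of_int (sign \<pi>) * (\<Prod>i\<in>UNIV. A q $ i $ \<pi> i)) differentiable (at p)"
    by (rule differentiable_mult[OF differentiable_const differentiable_prod'[OF assms]])
qed

lemma smooth_diff: "smooth_on U g \<Longrightarrow> p \<in> U \<Longrightarrow> g differentiable (at p)"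
  unfolding smooth_on_def using Ck_on.simps(2)[of 0 U g] by blast

lemma smooth_pd: "smooth_on U g \<Longrightarrow> smooth_on U (pd i g)"
  unfolding smooth_on_def using Ck_on.simps(2) by blast

lemma minv:
  fixes A :: "real^'n::finite^'n"
  assumes "invertible A"
  shows "A ** matrix_inv A = mat 1" "matrix_inv A ** A = mat 1"
proof -
  have "\<exists>B. A ** B = mat 1 \<and> B ** A = mat 1" using assms unfolding invertible_def by blast
  then have "A ** matrix_inv A = mat 1 \<and> matrix_inv A ** A = mat 1"
    unfolding matrix_inv_def by (rule someI_ex)
  then show "A ** matrix_inv A = mat 1" "matrix_inv A ** A = mat 1" by auto
qed

definition cram :: "real^'n::finite^'n \<Rightarrow> 'n \<Rightarrow> 'n \<Rightarrow> real" where
  "cram A i j = det (\<chi> r s. if s = i then (if r = j then 1 else 0) else A$r$s) / det A"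

lemma minv_cram:
  fixes A :: "real^'n::finite^'n"
  assumes "invertible A"
  shows "matrix_inv A $ i $ j = cram A i j"
proof -
  let ?x = "\<chi> r. matrix_inv A $ r $ j"
  have d: "det A \<noteq> 0" using assms invertible_det_nz by blast
  have "A *v ?x = axis j 1"
  proof -
    have "(A ** matrix_inv A) $ r $ j = (if r = j then 1 else 0)" for r
      using minv(1)[OF assms] by (simp add: mat_def)
    then show ?thesis
      by (simp add: vec_eq_iff matrix_vector_mult_def matrix_matrix_mult_def axis_def)
  qed
  then have "?x = (\<chi> k. det(\<chi> r s. if s=k then (axis j 1::real^'n)$r else A$r$s) / det A)"
    using cramer[OF d] by blast
  then have "?x $ i = det(\<chi> r s. if s=i then (axis j 1::real^'n)$r else A$r$s) / det A"
    by simp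
  moreover have "(\<chi> r s. if s=i then (axis j 1::real^'n)$r else A$r$s) = (\<chi> r s. if s = i then (if r = j then 1 else 0) else A$r$s)"
    by (simp add: vec_eq_iff axis_def)
  ultimately show ?thesis unfolding cram_def by simp
qed

lemma diff_if_const:
  "(P \<Longrightarrow> f differentiable (at p)) \<Longrightarrow> (\<not>P \<Longrightarrow> g differentiable (at p)) \<Longrightarrow>
   (\<lambda>q. if P then f q else g q) differentiable (at p)"
  by (cases P) auto

lemma cram_diff:
  fixes A :: "real^'m::finite \<Rightarrow> real^'n::finite^'n"
  assumes "\<And>r s. (\<lambda>q. A q $ r $ s) differentiable (at p)" "det (A p) \<noteq> 0"
  shows "(\<lambda>q. cram (A q) i j) differentiable (at p)"
  unfolding cram_def
  by (intro differentiable_divide det_differentiable assms) (auto intro!: diff_if_const assms)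

lemma minv_diff:
  fixes A :: "real^'m::finite \<Rightarrow> real^'n::finite^'n"
  assumes "open U" "p \<in> U" "\<And>q. q \<in> U \<Longrightarrow> invertible (A q)"
    "\<And>r s. (\<lambda>q. A q $ r $ s) differentiable (at p)"
  shows "(\<lambda>q. matrix_inv (A q) $ i $ j) differentiable (at p)"
proof -
  have "(\<lambda>q. cram (A q) i j) differentiable (at p)"
    using cram_diff[OF assms(4)] assms(2,3) invertible_det_nz by blast
  then show ?thesis
    by (rule diff_local[OF assms(1,2), rotated]) (use minv_cram assms(3) in force)
qed

lemma mm_entry: "(A ** B) $ i $ j = (\<Sum>k\<in>UNIV. A$i$k * B$k$j)"
  by (simp add: matrix_matrix_mult_def)

lemma sum_delta1[simp]: fixes k :: "'n::finite" shows "(\<Sum>i\<in>UNIV. x i * (if i = k then 1 else (0::real))) = x k"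
  by (simp add: if_distrib[of "\<lambda>t. x _ * t"] sum.delta sum.delta' cong: if_cong)

lemma sum_delta2[simp]: fixes k :: "'n::finite" shows "(\<Sum>i\<in>UNIV. x i * (if k = i then 1 else (0::real))) = x k"
  by (simp add: if_distrib[of "\<lambda>t. x _ * t"] sum.delta sum.delta' cong: if_cong)

lemma alg_lemma:
  fixes F Fi :: "real^'n::finite^'n" and D :: "'n \<Rightarrow> real^'n^'n" and \<gamma> :: "'n \<Rightarrow> real"
    and \<sigma> :: "real^'n"
  assumes sym: "\<And>i j. F$i$j = F$j$i"
   and i1: "F ** Fi = mat 1" and i2: "Fi ** F = mat 1"
   and D: "\<And>k i j. D k $i$j = \<gamma> k * F$i$j + \<sigma>$i * F$k$j + \<sigma>$j * F$k$i"
  shows "(\<Sum>i\<in>UNIV. \<Sum>j\<in>UNIV. Fi$i$j * D k $i$j) = real CARD('n) * \<gamma> k + 2 * \<sigma>$k"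
    and "(\<Sum>i\<in>UNIV. \<Sum>j\<in>UNIV. Fi$i$j * D j $i$k) = \<gamma> k + (real CARD('n) + 1) * \<sigma>$k"
proof -
  have e1: "(\<Sum>j\<in>UNIV. Fi$i$j * F$j$l) = (if i = l then 1 else 0)" for i l
    using arg_cong[OF i2, of "\<lambda>M. M$i$l"] by (simp add: mm_entry mat_def)
  have e2: "(\<Sum>j\<in>UNIV. F$i$j * Fi$j$l) = (if i = l then 1 else 0)" for i l
    using arg_cong[OF i1, of "\<lambda>M. M$i$l"] by (simp add: mm_entry mat_def)
  let ?n = "real CARD('n)"
  have T1: "(\<Sum>i\<in>UNIV. \<Sum>j\<in>UNIV. Fi$i$j * (\<gamma> k * F$i$j)) = ?n * \<gamma> k"
  proof -
    have "(\<Sum>j\<in>UNIV. Fi$i$j * (\<gamma> k * F$i$j)) = \<gamma> k * (\<Sum>j\<in>UNIV. Fi$i$j * F$j$i)" for i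
      unfolding sum_distrib_left by (rule sum.cong) (use sym in auto)
    then show ?thesis by (simp add: e1)
  qed
  have T2: "(\<Sum>i\<in>UNIV. \<Sum>j\<in>UNIV. Fi$i$j * (\<sigma>$i * F$k$j)) = \<sigma>$k"
  proof -
    have "(\<Sum>j\<in>UNIV. Fi$i$j * (\<sigma>$i * F$k$j)) = \<sigma>$i * (\<Sum>j\<in>UNIV. Fi$i$j * F$j$k)" for i
      unfolding sum_distrib_left by (rule sum.cong) (use sym in auto)
    then show ?thesis by (simp add: e1)
  qed
  have T5: "(\<Sum>i\<in>UNIV. \<Sum>j\<in>UNIV. Fi$i$j * (\<sigma>$i * F$j$k)) = \<sigma>$k"
  proof -
    have "(\<Sum>j\<in>UNIV. Fi$i$j * (\<sigma>$i * F$j$k)) = \<sigma>$i * (\<Sum>j\<in>UNIV. Fi$i$j * F$j$k)" for i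
      unfolding sum_distrib_left by (rule sum.cong) auto
    then show ?thesis by (simp add: e1)
  qed
  have T3: "(\<Sum>i\<in>UNIV. \<Sum>j\<in>UNIV. Fi$i$j * (\<sigma>$j * F$k$i)) = \<sigma>$k"
  proof -
    have "(\<Sum>i\<in>UNIV. \<Sum>j\<in>UNIV. Fi$i$j * (\<sigma>$j * F$k$i)) = (\<Sum>j\<in>UNIV. \<Sum>i\<in>UNIV. Fi$i$j * (\<sigma>$j * F$k$i))"
      by (rule sum.swap)
    also have "\<dots> = (\<Sum>j\<in>UNIV. \<sigma>$j * (\<Sum>i\<in>UNIV. F$k$i * Fi$i$j))"
      unfolding sum_distrib_left by (intro sum.cong) auto
    finally show ?thesis by (simp add: e2)
  qed
  have T4: "(\<Sum>i\<in>UNIV. \<Sum>j\<in>UNIV. Fi$i$j * (\<gamma> j * F$i$k)) = \<gamma> k"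
  proof -
    have "(\<Sum>i\<in>UNIV. \<Sum>j\<in>UNIV. Fi$i$j * (\<gamma> j * F$i$k)) = (\<Sum>j\<in>UNIV. \<Sum>i\<in>UNIV. Fi$i$j * (\<gamma> j * F$i$k))"
      by (rule sum.swap)
    also have "\<dots> = (\<Sum>j\<in>UNIV. \<gamma> j * (\<Sum>i\<in>UNIV. F$k$i * Fi$i$j))"
      unfolding sum_distrib_left by (intro sum.cong) (use sym in auto)
    finally show ?thesis by (simp add: e2)
  qed
  have T6: "(\<Sum>i\<in>UNIV. \<Sum>j\<in>UNIV. Fi$i$j * (\<sigma>$k * F$j$i)) = ?n * \<sigma>$k"
  proof -
    have "(\<Sum>j\<in>UNIV. Fi$i$j * (\<sigma>$k * F$j$i)) = \<sigma>$k * (\<Sum>j\<in>UNIV. Fi$i$j * F$j$i)" for i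
      unfolding sum_distrib_left by (rule sum.cong) auto
    then show ?thesis by (simp add: e1)
  qed
  show "(\<Sum>i\<in>UNIV. \<Sum>j\<in>UNIV. Fi$i$j * D k $i$j) = ?n * \<gamma> k + 2 * \<sigma>$k"
    using T1 T2 T3 by (simp add: D distrib_left sum.distrib)
  show "(\<Sum>i\<in>UNIV. \<Sum>j\<in>UNIV. Fi$i$j * D j $i$k) = \<gamma> k + (?n + 1) * \<sigma>$k"
    using T4 T5 T6 by (simp add: D distrib_left sum.distrib algebra_simps)
qed

lemma sum2_lin: "(\<Sum>i\<in>UNIV. \<Sum>j\<in>UNIV. (G i j::real) * (a * X i j - b * Y i j)) =
   a * (\<Sum>i\<in>UNIV. \<Sum>j\<in>UNIV. G i j * X i j) - b * (\<Sum>i\<in>UNIV. \<Sum>j\<in>UNIV. G i j * Y i j)"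
  by (simp add: sum_distrib_left sum_subtractf algebra_simps)

lemma coef_lemma:
  fixes F :: "real^'n::finite \<Rightarrow> real^'n^'n"
  assumes n2: "CARD('n) \<ge> 2"
    and sym: "transpose (F p) = F p" and inv: "invertible (F p)"
    and D: "\<And>k i j. pd k (ent F i j) p = \<gamma> k * F p$i$j + \<sigma>$i * F p$k$j + \<sigma>$j * F p$k$i"
  shows "s_coef F k p = \<sigma>$k" "c_coef F k p = \<gamma> k - 2*\<sigma>$k" "a_coef F i j k p = 0"
proof -
  let ?n = "real CARD('n)"
  let ?Fi = "matrix_inv (F p)"
  let ?D = "\<lambda>k. \<chi> i j. pd k (ent F i j) p"
  have sy: "\<And>i j. F p$i$j = F p$j$i"
    using sym by (metis transpose_def vec_lambda_beta)
  have DD: "\<And>k i j. ?D k $i$j = \<gamma> k * F p$i$j + \<sigma>$i * F p$k$j + \<sigma>$j * F p$k$i"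
    using D by simp
  note A = alg_lemma(1)[OF sy minv[OF inv] DD, simplified]
  note B = alg_lemma(2)[OF sy minv[OF inv] DD, simplified]
  have n2': "?n \<ge> 2" using n2 by simp
  have nz1: "(?n + 2) * (1 - ?n) \<noteq> 0" and nz2: "(?n + 2) * (?n - 1) \<noteq> 0" using n2' by auto
  have s: "s_coef F k' p = \<sigma>$k'" for k'
  proof -
    have "(\<Sum>i\<in>UNIV. \<Sum>j\<in>UNIV. ?Fi$i$j * (pd k' (ent F i j) p - ?n * pd j (ent F i k') p))
        = (\<Sum>i\<in>UNIV. \<Sum>j\<in>UNIV. ?Fi$i$j * (1 * pd k' (ent F i j) p - ?n * pd j (ent F i k') p))" by simp
    also have "\<dots> = ?n * \<gamma> k' + 2 * \<sigma>$k' - ?n * (\<gamma> k' + (?n + 1) * \<sigma>$k')"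
      unfolding sum2_lin using A[of k'] B[of k'] by simp
    also have "\<dots> = (?n + 2) * (1 - ?n) * \<sigma>$k'" by (simp add: algebra_simps)
    finally show ?thesis unfolding s_coef_def Let_def using nz1 by simp
  qed
  show "s_coef F k p = \<sigma>$k" by (rule s)
  have c: "c_coef F k' p = \<gamma> k' - 2*\<sigma>$k'" for k'
  proof -
    have "(\<Sum>i\<in>UNIV. \<Sum>j\<in>UNIV. ?Fi$i$j * ((?n + 3) * pd k' (ent F i j) p - 2 * (?n + 1) * pd j (ent F i k') p))
        = (?n + 3) * (?n * \<gamma> k' + 2 * \<sigma>$k') - 2 * (?n + 1) * (\<gamma> k' + (?n + 1) * \<sigma>$k')"
      unfolding sum2_lin using A[of k'] B[of k'] by simp
    also have "\<dots> = (?n + 2) * (?n - 1) * (\<gamma> k' - 2*\<sigma>$k')" by (simp add: algebra_simps)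
    finally show ?thesis unfolding c_coef_def Let_def using nz2 by simp
  qed
  show "c_coef F k p = \<gamma> k - 2*\<sigma>$k" by (rule c)
  show "a_coef F i j k p = 0"
    unfolding a_coef_def s c D using sy[of k i] by (simp add: algebra_simps)
qed

definition outer :: "real^'n::finite \<Rightarrow> real^'m::finite \<Rightarrow> real^'m^'n" where
  "outer u v = (\<chi> i j. u$i * v$j)"

definition mpd :: "'k::finite \<Rightarrow> (real^'k \<Rightarrow> real^'m::finite^'n::finite) \<Rightarrow> real^'k \<Rightarrow> real^'m^'n" where
  "mpd k A q = (\<chi> i j. pd k (\<lambda>q'. A q' $i$j) q)"

definition mdiff :: "(real^'k::finite \<Rightarrow> real^'m::finite^'n::finite) \<Rightarrow> real^'k \<Rightarrow> bool" where
  "mdiff A q = (\<forall>i j. (\<lambda>q'. A q' $i$j) differentiable (at q))"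

lemma mdiff_mult:
  fixes A :: "real^'k::finite \<Rightarrow> real^'m::finite^'n::finite" and B :: "real^'k \<Rightarrow> real^'l::finite^'m"
  assumes "mdiff A q" "mdiff B q"
  shows "mdiff (\<lambda>q'. A q' ** B q') q"
  using assms unfolding mdiff_def matrix_matrix_mult_def
  by (auto intro!: differentiable_sum differentiable_mult)

lemma mpd_mult:
  fixes A :: "real^'k::finite \<Rightarrow> real^'m::finite^'n::finite" and B :: "real^'k \<Rightarrow> real^'l::finite^'m"
  assumes "mdiff A q" "mdiff B q"
  shows "mpd k (\<lambda>q'. A q' ** B q') q = mpd k A q ** B q + A q ** mpd k B q"
proof -
  have "pd k (\<lambda>q'. \<Sum>l\<in>UNIV. A q' $ i $ l * B q' $ l $ j) q
      = (\<Sum>l\<in>UNIV. A q $ i $ l * pd k (\<lambda>q'. B q' $ l $ j) q + pd k (\<lambda>q'. A q' $ i $ l) q * B q $ l $ j)"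
    for i j
    using assms unfolding mdiff_def
    by (subst pd_sum) (auto intro!: differentiable_mult pd_mult sum.cong)
  then show ?thesis
    unfolding mpd_def by (simp add: vec_eq_iff matrix_matrix_mult_def sum.distrib algebra_simps)
qed

lemma mdiff_transpose: "mdiff A q \<Longrightarrow> mdiff (\<lambda>q'. transpose (A q')) q"
  unfolding mdiff_def transpose_def by simp

lemma mpd_transpose: "mpd k (\<lambda>q'. transpose (A q')) q = transpose (mpd k A q)"
  unfolding mpd_def transpose_def by simp

lemma outer_mult: "A ** outer u v ** transpose B = outer (A *v u) (B *v v)"
proof -
  have "(\<Sum>m\<in>UNIV. (\<Sum>l\<in>UNIV. A$i$l * (u$l * v$m)) * B$j$m)
      = (\<Sum>m\<in>UNIV. \<Sum>l\<in>UNIV. (A$i$l * u$l) * (B$j$m * v$m))" for i j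
    by (simp add: sum_distrib_left sum_distrib_right mult_ac)
  also have "\<dots> i j = (\<Sum>l\<in>UNIV. A$i$l * u$l) * (\<Sum>m\<in>UNIV. B$j$m * v$m)" for i j
    by (simp add: sum_distrib_left sum_distrib_right)
  finally have e: "(\<Sum>m\<in>UNIV. (\<Sum>l\<in>UNIV. A$i$l * (u$l * v$m)) * B$j$m) = (\<Sum>l\<in>UNIV. A$i$l * u$l) * (\<Sum>m\<in>UNIV. B$j$m * v$m)" for i j .
  show ?thesis
    by (simp add: vec_eq_iff matrix_matrix_mult_def matrix_vector_mult_def transpose_def outer_def e)
qed

lemma outer_mult_left: "outer u v ** A = outer u (transpose A *v v)"
  by (simp add: vec_eq_iff matrix_matrix_mult_def matrix_vector_mult_def transpose_def outer_def
      sum_distrib_left mult_ac)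

lemma outer_transpose: "transpose (outer u v) = outer v u"
  by (simp add: vec_eq_iff transpose_def outer_def mult_ac)

lemma cancel_MT:
  fixes M X Y :: "real^'n::finite^'n"
  assumes "invertible M" "M ** X ** transpose M = M ** Y ** transpose M"
  shows "X = Y"
proof -
  let ?Mi = "matrix_inv M"
  have a: "?Mi ** M = mat 1" using minv[OF assms(1)] by simp
  have b: "transpose M ** transpose ?Mi = mat 1"
    using arg_cong[OF a, of transpose] by (simp add: matrix_transpose_mul)
  have "?Mi ** (M ** X ** transpose M) ** transpose ?Mi = X" for X
  proof -
    have "?Mi ** (M ** X ** transpose M) ** transpose ?Mi = (?Mi ** M) ** X ** (transpose M ** transpose ?Mi)"
      by (simp only: matrix_mul_assoc)
    also have "\<dots> = X" by (simp only: a b matrix_mul_lid matrix_mul_rid)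
    finally show ?thesis .
  qed
  from this[of X] this[of Y] assms(2) show ?thesis by metis
qed

lemma madd_r: "((A::real^'m::finite^'n::finite) + B) ** (C::real^'l::finite^'m) = A ** C + B ** C"
  by (simp add: vec_eq_iff matrix_matrix_mult_def sum.distrib algebra_simps)
lemma madd_l: "(A::real^'m::finite^'n::finite) ** ((B::real^'l::finite^'m) + C) = A ** B + A ** C"
  by (simp add: vec_eq_iff matrix_matrix_mult_def sum.distrib algebra_simps)
lemma mscale_r: "(t *\<^sub>R (A::real^'m::finite^'n::finite)) ** (C::real^'l::finite^'m) = t *\<^sub>R (A ** C)"
  by (simp add: vec_eq_iff matrix_matrix_mult_def sum_distrib_left algebra_simps)
lemma mscale_l: "(A::real^'m::finite^'n::finite) ** (t *\<^sub>R (C::real^'l::finite^'m)) = t *\<^sub>R (A ** C)"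
  by (simp add: vec_eq_iff matrix_matrix_mult_def sum_distrib_left algebra_simps)
lemma outer_neg: "outer (- u) v = - outer u v"
  by (simp add: vec_eq_iff outer_def)
lemma outer_neg2: "outer u (- v) = - outer u v"
  by (simp add: vec_eq_iff outer_def)
lemma outer_scale: "outer (t *\<^sub>R u) v = t *\<^sub>R outer u v"
  by (simp add: vec_eq_iff outer_def)

lemma mv_axis: "(F::real^'n::finite^'m::finite) *v axis k 1 = (\<chi> i. F$i$k)"
  by (simp add: vec_eq_iff matrix_vector_mult_def axis_def if_distrib[of "\<lambda>t. _ * t"] sum.delta' cong: if_cong)

lemma ent_eta: "ent F i j = (\<lambda>q. F q $ i $ j)" by (simp add: ent_def)

lemma key_identity:
  fixes M F Dk :: "real^'n::finite^'n" and b \<sigma> :: "real^'n"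
  assumes Minv: "invertible M" and sym: "transpose F = F"
    and Ms: "M *v \<sigma> = - b"
    and P: "t *\<^sub>R (M ** F ** transpose M) = outer b (axis k 1) ** F ** transpose M + M ** Dk ** transpose M
            + M ** F ** transpose (outer b (axis k 1))"
  shows "Dk = t *\<^sub>R F + outer \<sigma> (\<chi> i. F$i$k) + outer (\<chi> i. F$i$k) \<sigma>"
proof (rule cancel_MT[OF Minv])
  let ?Fc = "\<chi> i. F$i$k"
  have e1: "outer b (axis k 1) ** F ** transpose M = outer b (M *v ?Fc)"
  proof -
    have "outer b (axis k 1) ** F = outer b (F *v axis k 1)"
      using outer_mult_left[of b "axis k 1" F] sym by simp
    then have "outer b (axis k 1) ** F ** transpose M = mat 1 ** outer b ?Fc ** transpose M"
      by (simp add: mv_axis)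
    also have "\<dots> = outer b (M *v ?Fc)" by (rule trans[OF outer_mult], simp)
    finally show ?thesis .
  qed
  have e2: "M ** F ** transpose (outer b (axis k 1)) = outer (M *v ?Fc) b"
  proof -
    have "M ** F ** transpose (outer b (axis k 1)) = (M ** F) ** outer (axis k 1) b ** transpose (mat 1)"
      by (simp add: outer_transpose)
    also have "\<dots> = outer (M *v ?Fc) b"
    proof -
      have "(\<chi> i. (M ** F)$i$k) = M *v ?Fc"
        by (simp add: vec_eq_iff matrix_matrix_mult_def matrix_vector_mult_def)
      then show ?thesis using outer_mult[of "M ** F" "axis k 1" b "mat 1"] by (simp add: mv_axis)
    qed
    finally show ?thesis .
  qed
  have "M ** Dk ** transpose M = t *\<^sub>R (M ** F ** transpose M) - outer b (M *v ?Fc) - outer (M *v ?Fc) b"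
    using P e1 e2 by (simp add: algebra_simps)
  also have "\<dots> = M ** (t *\<^sub>R F + outer \<sigma> ?Fc + outer ?Fc \<sigma>) ** transpose M"
    by (simp add: madd_l madd_r mscale_l mscale_r outer_mult Ms outer_neg outer_neg2 algebra_simps)
  finally show "M ** Dk ** transpose M = M ** (t *\<^sub>R F + outer \<sigma> ?Fc + outer ?Fc \<sigma>) ** transpose M" .
qed

lemma Cbp_entry[simp]: "Cbp C b q $ i $ j = C$i$j + b$i * q$j"
  by (simp add: Cbp_def)

lemma Cbp_diff: "(\<lambda>q. Cbp C b q $ i $ j) differentiable (at p)"
  by simp

lemma Cbp_mdiff: "mdiff (Cbp C b) p"
  unfolding mdiff_def by simp

lemma Cbp_pd: "pd k (\<lambda>q. Cbp C b q $ i $ j) p = b$i * (if j = k then 1 else 0)"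
proof -
  have "pd k (\<lambda>q. C$i$j + b$i * q$j) p = pd k (\<lambda>q. C$i$j) p + pd k (\<lambda>q. b$i * q$j) p"
    by (rule pd_add) simp_all
  also have "\<dots> = b$i * (if j = k then 1 else 0)" by (simp add: pd_cmult pd_nth)
  finally show ?thesis by simp
qed

lemma Cbp_mpd: "mpd k (Cbp C b) p = outer b (axis k 1)"
  unfolding mpd_def outer_def by (simp add: vec_eq_iff Cbp_pd[simplified] axis_def)

lemma inv_ne0: "invertible (A::real^'n::finite^'n) \<Longrightarrow> A \<noteq> 0"
proof
  assume "invertible A" "A = 0"
  then obtain B where "A ** B = mat 1" unfolding invertible_def by blast
  with \<open>A = 0\<close> have "(mat 1::real^'n^'n) = 0" by (simp add: vec_eq_iff matrix_matrix_mult_def)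
  then have "(mat 1::real^'n^'n) $ undefined $ undefined = 0" by simp
  then show False by (simp add: mat_def)
qed

lemma inv_prod3: "invertible (A::real^'n::finite^'n) \<Longrightarrow> invertible B \<Longrightarrow> invertible (A ** B ** transpose A)"
  by (simp add: invertible_det_nz det_mul)

definition crsol :: "real^'n::finite^'n \<Rightarrow> real^'n \<Rightarrow> real^'n" where
  "crsol A y = (\<chi> k. det(\<chi> i j. if j=k then y$i else A$i$j) / det A)"

lemma crsol: "det A \<noteq> 0 \<Longrightarrow> A *v crsol A y = y"
  unfolding crsol_def using cramer by blast

lemma crsol_diff:
  fixes A :: "real^'m::finite \<Rightarrow> real^'n::finite^'n"
  assumes "\<And>r s. (\<lambda>q. A q $ r $ s) differentiable (at p)" "det (A p) \<noteq> 0"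
  shows "(\<lambda>q. crsol (A q) y $ k) differentiable (at p)"
  unfolding crsol_def
  by (simp, intro differentiable_divide det_differentiable assms) (auto intro!: diff_if_const assms)

lemma forward:
  fixes F :: "real^'n::finite \<Rightarrow> real^'n^'n" and U
  assumes n2: "CARD('n) \<ge> 2" and sm: "\<And>i j. smooth_on U (ent F i j)"
    and sy: "\<And>p. p \<in> U \<Longrightarrow> transpose (F p) = F p"
    and iv: "\<And>p. p \<in> U \<Longrightarrow> invertible (F p)"
    and lin: "linearizable_at F U p0"
  shows "(\<forall>i j k. a_coef F i j k p0 = 0) \<and>
         (\<forall>i j. pd j (s_coef F i) p0 - s_coef F i p0 * s_coef F j p0 = 0)"
proof -
  obtain V C b c \<beta> lam K where V: "open V" "p0 \<in> V" "V \<subseteq> U"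
    and tr: "\<And>p. p \<in> V \<Longrightarrow> det (Cbp C b p) \<noteq> 0 \<and> transformed_coef C b F p = lam p *\<^sub>R K"
    using lin unfolding linearizable_at_def by blast
  define M where "M = Cbp C b"
  define P where "P q = M q ** F q ** transpose (M q)" for q
  define \<sigma> where "\<sigma> q = crsol (M q) (- b)" for q
  have dM: "det (M q) \<noteq> 0" if "q \<in> V" for q using tr that M_def by blast
  have Minv: "invertible (M q)" if "q \<in> V" for q using dM[OF that] invertible_det_nz by blast
  have Fdiff: "mdiff F q" if "q \<in> U" for q
    using sm smooth_diff[OF _ that] unfolding mdiff_def ent_def by blast
  have Ms: "M q *v \<sigma> q = - b" if "q \<in> V" for q unfolding \<sigma>_def by (rule crsol[OF dM[OF that]])
  have Pinv: "invertible (P q)" if "q \<in> V" for q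
    unfolding P_def using inv_prod3 Minv[OF that] iv V(3) that by blast
  have PK: "det (M q) *\<^sub>R P q = lam q *\<^sub>R K" if "q \<in> V" for q
    using tr[OF that] unfolding transformed_coef_def M_def P_def by simp
  have "K \<noteq> 0"
  proof
    assume "K = 0"
    then have "P p0 = 0" using PK[OF V(2)] dM[OF V(2)] by simp
    then show False using inv_ne0 Pinv[OF V(2)] by blast
  qed
  then obtain a b' where Kab: "K$a$b' \<noteq> 0" by (metis vec_eq_iff zero_index)
  define \<nu> where "\<nu> q = P q $ a $ b' / K $ a $ b'" for q
  have Pnu: "P q = \<nu> q *\<^sub>R K" if q: "q \<in> V" for q
  proof -
    have "P q = (1 / det (M q)) *\<^sub>R (det (M q) *\<^sub>R P q)" using dM[OF q] by simp
    also have "\<dots> = (lam q / det (M q)) *\<^sub>R K" unfolding PK[OF q] by simp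
    finally have e: "P q = (lam q / det (M q)) *\<^sub>R K" .
    then have "\<nu> q = lam q / det (M q)" unfolding \<nu>_def using Kab by simp
    with e show ?thesis by simp
  qed
  have nu0: "\<nu> q \<noteq> 0" if "q \<in> V" for q using Pnu[OF that] Pinv[OF that] inv_ne0 by force
  have Pdiff: "mdiff P q" if q: "q \<in> V" for q
    unfolding P_def M_def
    by (intro mdiff_mult mdiff_transpose Cbp_mdiff Fdiff) (use q V(3) in auto)
  have nudiff: "\<nu> differentiable (at q)" if q: "q \<in> V" for q
  proof -
    have "(\<lambda>q. P q $ a $ b' / K $ a $ b') differentiable (at q)"
      using Pdiff[OF q] Kab unfolding mdiff_def by (intro differentiable_divide) auto
    then show ?thesis unfolding \<nu>_def[abs_def] .
  qed
  have Dform: "pd k (ent F i j) q = (pd k \<nu> q / \<nu> q) * F q$i$j + \<sigma> q$i * F q$k$j + \<sigma> q$j * F q$k$i"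
    if q: "q \<in> V" for q k i j
  proof -
    have qU: "q \<in> U" using q V(3) by blast
    have mpdP1: "mpd k P q = outer b (axis k 1) ** F q ** transpose (M q) + M q ** mpd k F q ** transpose (M q)
            + M q ** F q ** transpose (outer b (axis k 1))"
    proof -
      have "mpd k P q = mpd k (\<lambda>q. M q ** F q) q ** transpose (M q) + (M q ** F q) ** mpd k (\<lambda>q. transpose (M q)) q"
        unfolding P_def
        by (rule mpd_mult) (use Fdiff[OF qU] Cbp_mdiff M_def in \<open>auto intro: mdiff_mult mdiff_transpose\<close>)
      also have "mpd k (\<lambda>q. M q ** F q) q = mpd k M q ** F q + M q ** mpd k F q"
        by (rule mpd_mult) (use Fdiff[OF qU] Cbp_mdiff M_def in auto)
      finally show ?thesis
        by (simp add: mpd_transpose M_def Cbp_mpd madd_r matrix_mul_assoc)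
    qed
    have mpdP2: "mpd k P q = (pd k \<nu> q / \<nu> q) *\<^sub>R (M q ** F q ** transpose (M q))"
    proof -
      have "pd k (\<lambda>q'. P q' $ i' $ j') q = K$i'$j' * pd k \<nu> q" for i' j'
      proof -
        have "pd k (\<lambda>q'. P q' $ i' $ j') q = pd k (\<lambda>q'. K$i'$j' * \<nu> q') q"
          by (rule pd_local[OF V(1) q]) (use Pnu nudiff[OF q] in auto)
        also have "\<dots> = K$i'$j' * pd k \<nu> q" by (rule pd_cmult[OF nudiff[OF q]])
        finally show ?thesis .
      qed
      then have "mpd k P q = pd k \<nu> q *\<^sub>R K" unfolding mpd_def by (simp add: vec_eq_iff mult.commute)
      also have "K = (1 / \<nu> q) *\<^sub>R P q" using Pnu[OF q] nu0[OF q] by simp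
      finally show ?thesis unfolding P_def by simp
    qed
    have Dk: "mpd k F q = (pd k \<nu> q / \<nu> q) *\<^sub>R F q + outer (\<sigma> q) (\<chi> i. F q$i$k) + outer (\<chi> i. F q$i$k) (\<sigma> q)"
      by (rule key_identity[OF Minv[OF q] sy[OF qU] Ms[OF q]]) (use mpdP1 mpdP2 in simp)
    have sy': "F q $ i' $ j' = F q $ j' $ i'" for i' j'
      using sy[OF qU] by (metis transpose_def vec_lambda_beta)
    show ?thesis
      using arg_cong[OF Dk, of "\<lambda>X. X$i$j"] sy'[of j k] sy'[of i k]
      by (simp add: mpd_def outer_def ent_eta mult.commute)
  qed
  have scoef: "s_coef F i q = \<sigma> q $ i" if q: "q \<in> V" for q i
    using coef_lemma(1)[OF n2 sy iv Dform] q V(3) by blast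
  have a0: "a_coef F i j k p0 = 0" for i j k
    using coef_lemma(3)[OF n2 sy iv Dform] V by blast
  have sdiff: "(\<lambda>q. \<sigma> q $ l) differentiable (at p0)" for l
    unfolding \<sigma>_def M_def by (rule crsol_diff) (use dM[OF V(2)] M_def in auto)
  have ps: "pd j (s_coef F i) p0 = pd j (\<lambda>q. \<sigma> q $ i) p0" for i j
    by (rule pd_local[OF V(1,2)]) (use scoef sdiff in auto)
  have dsig: "pd j (\<lambda>q. \<sigma> q $ i) p0 = \<sigma> p0$j * \<sigma> p0$i" for i j
  proof -
    let ?d = "\<chi> l. pd j (\<lambda>q. \<sigma> q $ l) p0"
    have row: "(M p0 *v ?d)$i' + b$i' * \<sigma> p0$j = 0" for i'
    proof -
      have "pd j (\<lambda>q. \<Sum>l\<in>UNIV. M q $i' $l * \<sigma> q $ l) p0 = pd j (\<lambda>q. - b$i') p0"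
        by (rule pd_local[OF V(1,2)]) (use Ms in \<open>auto simp: matrix_vector_mult_def vec_eq_iff\<close>)
      also have "\<dots> = 0" by simp
      finally have z: "pd j (\<lambda>q. \<Sum>l\<in>UNIV. M q $i' $l * \<sigma> q $ l) p0 = 0" .
      have "pd j (\<lambda>q. \<Sum>l\<in>UNIV. M q $i' $l * \<sigma> q $ l) p0
          = (\<Sum>l\<in>UNIV. M p0 $i' $l * pd j (\<lambda>q. \<sigma> q $ l) p0 + pd j (\<lambda>q. M q $i' $l) p0 * \<sigma> p0 $ l)"
        by (subst pd_sum) (auto intro!: sum.cong pd_mult sdiff differentiable_mult simp: M_def)
      also have "\<dots> = (M p0 *v ?d)$i' + b$i' * \<sigma> p0$j"
        by (simp add: sum.distrib matrix_vector_mult_def M_def Cbp_pd[simplified] if_distrib[of "\<lambda>t. _ * t"]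
              if_distrib[of "\<lambda>t. t * _"] sum.delta sum.delta' cong: if_cong)
      finally show ?thesis using z by simp
    qed
    have "M p0 *v ?d = M p0 *v (\<sigma> p0$j *\<^sub>R \<sigma> p0)"
    proof -
      have "(M p0 *v ?d)$i' = (M p0 *v (\<sigma> p0$j *\<^sub>R \<sigma> p0))$i'" for i'
      proof -
        have mb: "(M p0 *v \<sigma> p0)$i' = - b$i'" using Ms[OF V(2)] by simp
        have rr: "(M p0 *v ?d)$i' = - (b$i' * \<sigma> p0$j)" using row[of i'] by linarith
        show ?thesis unfolding matrix_vector_mult_scaleR using mb rr by simp
      qed
      then show ?thesis by (simp add: vec_eq_iff)
    qed
    then have "?d = \<sigma> p0$j *\<^sub>R \<sigma> p0"
      using inj_matrix_vector_mult[OF Minv[OF V(2)]] by (simp add: inj_eq)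
    then show ?thesis by (metis vec_lambda_beta vector_scaleR_component scaleR_conv_of_real of_real_eq_id id_apply)
  qed
  show ?thesis
    using a0 ps dsig scoef[OF V(2)] by simp
qed

lemma gronwall_ball:
  fixes E :: "real^'n::finite \<Rightarrow> real"
  assumes diff: "\<And>q. q \<in> ball p0 r \<Longrightarrow> E differentiable (at q)"
    and nn: "\<And>q. q \<in> ball p0 r \<Longrightarrow> E q \<ge> 0" and E0: "E p0 = 0"
    and bd: "\<And>q v. q \<in> ball p0 r \<Longrightarrow> (\<Sum>j\<in>UNIV. v$j * pd j E q) \<le> L * norm v * E q"
    and q: "q \<in> ball p0 r"
  shows "E q = 0"
proof -
  define v where "v = q - p0"
  define \<gamma> where "\<gamma> t = p0 + t *\<^sub>R v" for t
  define c where "c = L * norm v"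
  define g where "g t = E (\<gamma> t)" for t
  define k where "k t = g t * exp (- c * t)" for t
  have \<gamma>ball: "\<gamma> t \<in> ball p0 r" if "0 \<le> t" "t \<le> 1" for t
  proof -
    have "dist p0 (\<gamma> t) = t * norm v" unfolding \<gamma>_def dist_norm using that by simp
    also have "\<dots> \<le> norm v" using that by (simp add: mult_left_le_one_le)
    also have "norm v < r" using q unfolding v_def by (simp add: dist_norm norm_minus_commute)
    finally show ?thesis by simp
  qed
  have gd: "(g has_real_derivative (\<Sum>j\<in>UNIV. v$j * pd j E (\<gamma> t))) (at t)"
    if "0 \<le> t" "t \<le> 1" for t
  proof -
    have g1: "(\<gamma> has_derivative (\<lambda>s. s *\<^sub>R v)) (at t)"
      unfolding \<gamma>_def[abs_def] by (auto intro!: derivative_eq_intros)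
    have "((\<lambda>t. E (\<gamma> t)) has_derivative (\<lambda>s. \<Sum>j\<in>UNIV. (s *\<^sub>R v)$j * pd j E (\<gamma> t))) (at t)"
      by (rule has_derivative_compose[OF g1 has_pd[OF diff[OF \<gamma>ball[OF that]]]])
    then show ?thesis unfolding g_def[abs_def]
      by (rule has_derivative_imp_has_field_derivative) (simp add: sum_distrib_left mult_ac)
  qed
  have kd: "\<exists>y. DERIV k t :> y \<and> y \<le> 0" if "0 \<le> t" "t \<le> 1" for t
  proof -
    let ?g' = "\<Sum>j\<in>UNIV. v$j * pd j E (\<gamma> t)"
    have e: "DERIV (\<lambda>t. exp (- c * t)) t :> exp (- c * t) * (- c)"
      by (auto intro!: derivative_eq_intros)
    have "DERIV k t :> ?g' * exp (- c * t) + g t * (exp (- c * t) * (- c))"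
      unfolding k_def[abs_def] by (rule DERIV_mult'[OF gd[OF that] e, THEN DERIV_cong]) (simp add: algebra_simps)
    moreover have "?g' * exp (- c * t) + g t * (exp (- c * t) * (- c)) = exp (- c * t) * (?g' - c * g t)"
      by (simp add: algebra_simps)
    moreover have "?g' - c * g t \<le> 0" using bd[OF \<gamma>ball[OF that], of v] unfolding c_def g_def by simp
    then have "exp (- c * t) * (?g' - c * g t) \<le> 0" by (simp add: mult_nonneg_nonpos)
    ultimately show ?thesis by auto
  qed
  have "k 1 \<le> k 0" using DERIV_nonpos_imp_nonincreasing[of 0 1 k] kd by auto
  moreover have "k 0 = 0" unfolding k_def g_def \<gamma>_def using E0 by simp
  moreover have "k 1 \<ge> 0" unfolding k_def g_def using nn[OF \<gamma>ball[of 1]] by simp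
  ultimately have "k 1 = 0" by simp
  then have "g 1 = 0" unfolding k_def by simp
  then show ?thesis unfolding g_def \<gamma>_def v_def by simp
qed

lemma bound_near:
  fixes f :: "real^'n::finite \<Rightarrow> real^'m::finite"
  assumes "\<And>i. (\<lambda>q. f q $ i) differentiable (at p0)"
  shows "\<exists>d>0. \<forall>q\<in>ball p0 d. norm (f q) \<le> norm (f p0) + 1"
proof -
  have c: "continuous (at p0) (\<lambda>q. f q $ i)" for i by (rule differentiable_imp_continuous_within[OF assms])
  have "((\<lambda>q. \<chi> i. f q $ i) \<longlongrightarrow> (\<chi> i. f p0 $ i)) (at p0)"
    by (intro tendsto_vec_lambda) (use c in \<open>simp add: continuous_at\<close>)
  then have "continuous (at p0) f" unfolding continuous_at by simp
  then obtain d where d: "d > 0" "f ` ball p0 d \<subseteq> ball (f p0) 1"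
    unfolding continuous_at_ball by (meson zero_less_one)
  have "norm (f q) \<le> norm (f p0) + 1" if "q \<in> ball p0 d" for q
  proof -
    have "f q \<in> ball (f p0) 1" using d(2) that by blast
    then have "dist (f p0) (f q) < 1" by simp
    then show ?thesis using norm_triangle_ineq2[of "f q" "f p0"] by (simp add: dist_norm norm_minus_commute)
  qed
  with d show ?thesis by blast
qed

lemma pd_affine: "pd j (\<lambda>q. 1 - inner (s0::real^'n::finite) (q - p0)) q = - s0$j"
proof -
  have "((\<lambda>q. 1 - inner s0 (q - p0)) has_derivative (\<lambda>h. - inner s0 h)) (at q)"
    by (auto intro!: derivative_eq_intros)
  from pd_has[OF this] show ?thesis by (simp add: inner_axis)
qed

lemma diff_affine: "(\<lambda>q. 1 - inner (s0::real^'n::finite) (q - p0)) differentiable (at q)"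
  by (auto intro!: derivative_intros)

lemma riccati_unique:
  fixes s :: "'n::finite \<Rightarrow> real^'n \<Rightarrow> real"
  assumes sd: "\<And>q i. q \<in> ball p0 r \<Longrightarrow> s i differentiable (at q)"
   and flat: "\<And>q i j. q \<in> ball p0 r \<Longrightarrow> pd j (s i) q = s i q * s j q"
   and bnd: "\<And>q. q \<in> ball p0 r \<Longrightarrow> norm (\<chi> i. s i q) \<le> S"
   and q: "q \<in> ball p0 r"
  shows "(1 - inner (\<chi> i. s i p0) (q - p0)) * s i q = s i p0"
proof -
  define s0 where "s0 = (\<chi> i. s i p0)"
  define \<psi> where "\<psi> q = 1 - inner s0 (q - p0)" for q
  define X where "X i q = \<psi> q * s i q - s0$i" for i q
  define E where "E q = (\<Sum>i\<in>UNIV. X i q * X i q)" for q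
  have psd: "\<psi> differentiable (at q)" for q unfolding \<psi>_def[abs_def] by (rule diff_affine)
  have pspd: "pd j \<psi> q = - s0$j" for j q unfolding \<psi>_def[abs_def] by (rule pd_affine)
  have Xd: "X i differentiable (at q)" if "q \<in> ball p0 r" for i q
    unfolding X_def[abs_def] using psd sd[OF that] by (intro differentiable_diff differentiable_mult) auto
  have Xpd: "pd j (X i) q = s i q * X j q" if "q \<in> ball p0 r" for i j q
  proof -
    have "pd j (X i) q = pd j (\<lambda>q. \<psi> q * s i q) q - pd j (\<lambda>q. s0$i) q"
      unfolding X_def[abs_def] using psd sd[OF that] by (intro pd_diff differentiable_mult) auto
    also have "\<dots> = \<psi> q * (s i q * s j q) + (- s0$j) * s i q"
      using pd_mult[OF psd sd[OF that], of j] flat[OF that] pspd by simp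
    finally show ?thesis unfolding X_def by (simp add: algebra_simps)
  qed
  have Ed: "E differentiable (at q)" if "q \<in> ball p0 r" for q
    unfolding E_def[abs_def] using Xd[OF that] by (intro differentiable_sum) auto
  have Epd: "pd j E q = 2 * (\<Sum>i\<in>UNIV. X i q * s i q) * X j q" if "q \<in> ball p0 r" for j q
  proof -
    have e1: "pd j (\<lambda>q. X i q * X i q) q = X i q * pd j (X i) q + pd j (X i) q * X i q" for i
      by (rule pd_mult[OF Xd[OF that] Xd[OF that]])
    have "pd j E q = (\<Sum>i\<in>UNIV. pd j (\<lambda>q. X i q * X i q) q)"
      unfolding E_def[abs_def] by (rule pd_sum) (use Xd[OF that] in auto)
    also have "\<dots> = (\<Sum>i\<in>UNIV. X i q * pd j (X i) q + pd j (X i) q * X i q)"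
      by (simp only: e1)
    also have "\<dots> = 2 * (\<Sum>i\<in>UNIV. X i q * s i q) * X j q"
      by (simp add: Xpd[OF that] sum_distrib_left sum_distrib_right algebra_simps flip: sum.distrib)
    finally show ?thesis .
  qed
  have "E q = 0"
  proof (rule gronwall_ball[of p0 r E, OF Ed _ _ _ q])
    show "E q' \<ge> 0" for q' unfolding E_def by (auto intro: sum_nonneg)
    show "E p0 = 0" unfolding E_def X_def \<psi>_def s0_def by simp
    show "(\<Sum>j\<in>UNIV. v$j * pd j E q') \<le> (2 * S) * norm v * E q'" if q': "q' \<in> ball p0 r" for q' v
    proof -
      define Xv where "Xv = (\<chi> i. X i q')"
      define sv where "sv = (\<chi> i. s i q')"
      define A where "A = (\<Sum>i\<in>UNIV. X i q' * s i q')"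
      have "(\<Sum>j\<in>UNIV. v$j * pd j E q') = (\<Sum>j\<in>UNIV. v$j * (2 * A * X j q'))"
        unfolding Epd[OF q'] A_def ..
      also have "\<dots> = 2 * A * (\<Sum>j\<in>UNIV. v$j * X j q')"
        by (simp add: sum_distrib_left mult_ac)
      also have "\<dots> = 2 * inner Xv sv * inner v Xv"
        unfolding Xv_def sv_def inner_vec_def A_def by simp
      also have "\<dots> \<le> 2 * (norm Xv * norm sv) * (norm v * norm Xv)"
      proof -
        have "\<bar>inner Xv sv * inner v Xv\<bar> \<le> (norm Xv * norm sv) * (norm v * norm Xv)"
          unfolding abs_mult by (intro mult_mono Cauchy_Schwarz_ineq2) auto
        then show ?thesis by linarith
      qed
      also have "\<dots> = 2 * norm sv * norm v * (norm Xv)\<^sup>2" by (simp add: power2_eq_square)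
      also have "(norm Xv)\<^sup>2 = E q'"
        unfolding E_def Xv_def power2_norm_eq_inner inner_vec_def by simp
      also have "2 * norm sv * norm v * E q' \<le> 2 * S * norm v * E q'"
        using bnd[OF q'] \<open>E q' \<ge> 0\<close> unfolding sv_def by (intro mult_right_mono) auto
      finally show ?thesis by simp
    qed
  qed
  then have "X i q * X i q = 0"
    unfolding E_def by (subst (asm) sum_nonneg_eq_0_iff) auto
  then show ?thesis unfolding X_def \<psi>_def s0_def by simp
qed

lemma prop_unique:
  fixes h :: "real^'n::finite \<Rightarrow> real" and \<gamma> :: "'n \<Rightarrow> real^'n \<Rightarrow> real"
  assumes hd: "\<And>q. q \<in> ball p0 r \<Longrightarrow> h differentiable (at q)"
   and hpd: "\<And>q k. q \<in> ball p0 r \<Longrightarrow> pd k h q = \<gamma> k q * h q"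
   and bnd: "\<And>q. q \<in> ball p0 r \<Longrightarrow> norm (\<chi> k. \<gamma> k q) \<le> G"
   and h0: "h p0 = 0" and q: "q \<in> ball p0 r"
  shows "h q = 0"
proof -
  define E where "E q = h q * h q" for q
  have Ed: "E differentiable (at q)" if "q \<in> ball p0 r" for q
    unfolding E_def[abs_def] by (rule differentiable_mult[OF hd[OF that] hd[OF that]])
  have Epd: "pd j E q = 2 * \<gamma> j q * E q" if "q \<in> ball p0 r" for j q
    unfolding E_def[abs_def] using pd_mult[OF hd[OF that] hd[OF that]] hpd[OF that] by simp
  have "E q = 0"
  proof (rule gronwall_ball[of p0 r E, OF Ed _ _ _ q])
    show "E q' \<ge> 0" for q' unfolding E_def by simp
    show "E p0 = 0" unfolding E_def h0 by simp
    show "(\<Sum>j\<in>UNIV. v$j * pd j E q') \<le> (2 * G) * norm v * E q'" if q': "q' \<in> ball p0 r" for q' v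
    proof -
      have En: "E q' \<ge> 0" unfolding E_def by simp
      have "(\<Sum>j\<in>UNIV. v$j * pd j E q') = 2 * inner v (\<chi> k. \<gamma> k q') * E q'"
        unfolding Epd[OF q'] inner_vec_def by (simp add: sum_distrib_left sum_distrib_right mult_ac)
      also have "\<dots> \<le> 2 * (norm v * G) * E q'"
      proof -
        have "inner v (\<chi> k. \<gamma> k q') \<le> norm v * G"
          using norm_cauchy_schwarz[of v "\<chi> k. \<gamma> k q'"] bnd[OF q']
          by (meson mult_left_mono norm_ge_zero order_trans)
        then show ?thesis using En by (intro mult_right_mono) auto
      qed
      finally show ?thesis by (simp add: mult_ac)
    qed
  qed
  then show ?thesis unfolding E_def by simp
qed

definition Cmat :: "real^'n::finite \<Rightarrow> real \<Rightarrow> real^'n^'n" where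
  "Cmat w \<alpha> = mat 1 + (if w = 0 then 0 else (\<alpha> - 1) / inner w w) *\<^sub>R outer w w"

lemma Cbp_outer: "Cbp C b q = C + outer b q"
  by (simp add: Cbp_def outer_def)

lemma Cmat_mv:
  fixes w :: "real^'n::finite"
  shows "Cbp (Cmat w \<alpha>) w q *v u = u + ((if w = 0 then 0 else (\<alpha> - 1) / inner w w) * inner w u + inner q u) *\<^sub>R w"
proof -
  define x where "x = (if w = 0 then 0 else (\<alpha> - 1) / inner w w)"
  have "(Cbp (Cmat w \<alpha>) w q *v u) $ i = u$i + (x * inner w u + inner q u) * w$i" for i
  proof -
    have "(Cbp (Cmat w \<alpha>) w q *v u) $ i = (\<Sum>j\<in>UNIV. ((if i = j then 1 else 0) + x * (w$i * w$j) + w$i * q$j) * u$j)"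
      unfolding Cbp_outer Cmat_def x_def matrix_vector_mult_def by (simp add: outer_def mat_def)
    also have "\<dots> = (\<Sum>j\<in>UNIV. (if i = j then 1 else 0) * u$j) + (\<Sum>j\<in>UNIV. x * (w$i * w$j) * u$j)
        + (\<Sum>j\<in>UNIV. w$i * q$j * u$j)"
      by (simp only: distrib_right sum.distrib)
    also have "(\<Sum>j\<in>UNIV. (if i = j then 1 else 0) * u$j) = u$i"
      by (simp add: if_distrib[of "\<lambda>t. t * _"] cong: if_cong)
    also have "(\<Sum>j\<in>UNIV. x * (w$i * w$j) * u$j) = x * w$i * inner w u"
      by (simp add: inner_vec_def sum_distrib_left mult_ac)
    also have "(\<Sum>j\<in>UNIV. w$i * q$j * u$j) = w$i * inner q u"
      by (simp add: inner_vec_def sum_distrib_left mult_ac)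
    finally show ?thesis by (simp add: algebra_simps)
  qed
  then show ?thesis unfolding x_def by (simp add: vec_eq_iff)
qed

lemma Cmat_w:
  fixes w :: "real^'n::finite"
  shows "Cbp (Cmat w \<alpha>) w q *v w = (\<alpha> + inner w q) *\<^sub>R w"
proof (cases "w = 0")
  case True then show ?thesis by simp
next
  case False
  then have ww: "inner w w \<noteq> 0" by simp
  have e: "(\<alpha> - 1) / inner w w * inner w w + inner q w = \<alpha> - 1 + inner w q"
    using ww by (simp add: inner_commute)
  have "Cbp (Cmat w \<alpha>) w q *v w = w + (\<alpha> - 1 + inner w q) *\<^sub>R w"
    unfolding Cmat_mv using False e by simp
  also have "\<dots> = (\<alpha> + inner w q) *\<^sub>R w" by (simp add: algebra_simps)
  finally show ?thesis .
qed

lemma Cmat_det: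
  fixes w :: "real^'n::finite"
  assumes "\<alpha> + inner w q \<noteq> 0"
  shows "det (Cbp (Cmat w \<alpha>) w q) \<noteq> 0"
proof -
  let ?M = "Cbp (Cmat w \<alpha>) w q"
  have "u = 0" if u: "?M *v u = 0" for u
  proof -
    define c where "c = (if w = 0 then 0 else (\<alpha> - 1) / inner w w) * inner w u + inner q u"
    have "u + c *\<^sub>R w = 0" using u unfolding Cmat_mv c_def .
    then have "u = - (c *\<^sub>R w)" by (simp add: eq_neg_iff_add_eq_0)
    then have uw: "u = (- c) *\<^sub>R w" by simp
    then have "?M *v u = (- c) *\<^sub>R (?M *v w)"
      by (simp only: matrix_vector_mult_scaleR)
    also have "\<dots> = (- c) *\<^sub>R ((\<alpha> + inner w q) *\<^sub>R w)" by (simp only: Cmat_w)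
    finally have "?M *v u = (- c) *\<^sub>R ((\<alpha> + inner w q) *\<^sub>R w)" .
    with u have "(- c) *\<^sub>R ((\<alpha> + inner w q) *\<^sub>R w) = 0" by simp
    with assms have "(- c) *\<^sub>R w = 0" by simp
    with uw show ?thesis by simp
  qed
  then have "\<exists>B. B ** ?M = mat 1" using matrix_left_invertible_ker by blast
  then show ?thesis using invertible_left_inverse invertible_det_nz by blast
qed

lemma sum_plus_unit: "(\<Sum>s\<in>(UNIV::('a::finite + unit) set). f s) = (\<Sum>j\<in>UNIV. f (Inl j)) + f (Inr ())"
proof -
  have "(\<Sum>s\<in>(UNIV::('a + unit) set). f s) = (\<Sum>s\<in>(UNIV <+> UNIV). f s)" by simp
  also have "\<dots> = (\<Sum>j\<in>UNIV. f (Inl j)) + (\<Sum>j\<in>(UNIV::unit set). f (Inr j))"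
    by (subst sum.Plus) auto
  finally show ?thesis by (simp add: UNIV_unit)
qed

lemma Cbp_zero: "Cbp C b 0 = C" by (simp add: Cbp_def vec_eq_iff)

lemma block_det_exists:
  fixes w :: "real^'n::finite"
  shows "\<exists>c \<beta>. det (block_mat (Cmat w \<alpha>) w c \<beta>) = 1"
proof -
  define \<beta>0 :: real where "\<beta>0 = (if w = 0 then 1 else 0)"
  define N0 where "N0 = block_mat (Cmat w \<alpha>) w w \<beta>0"
  define x where "x = (if w = 0 then 0 else (\<alpha> - 1) / inner w w)"
  have Cmv: "Cmat w \<alpha> *v u = u + (x * inner w u) *\<^sub>R w" for u
    unfolding x_def using Cmat_mv[of w \<alpha> 0 u] by (simp only: Cbp_zero inner_zero_left add_0_right)
  have "u' = 0" if u': "N0 *v u' = 0" for u'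
  proof -
    define u where "u = (\<chi> j. u' $ Inl j)"
    define t where "t = u' $ Inr ()"
    have r1: "(N0 *v u') $ Inl i = (Cmat w \<alpha> *v u) $ i + t * w$i" for i
      unfolding matrix_vector_mult_def sum_plus_unit N0_def block_mat_def u_def t_def by simp
    have r2: "(N0 *v u') $ Inr () = inner w u + \<beta>0 * t"
      unfolding matrix_vector_mult_def sum_plus_unit N0_def block_mat_def u_def t_def inner_vec_def by simp
    have e1: "Cmat w \<alpha> *v u + t *\<^sub>R w = 0" using r1 u' by (simp add: vec_eq_iff)
    have e2: "inner w u + \<beta>0 * t = 0" using r2 u' by simp
    have uw: "u = (- (x * inner w u + t)) *\<^sub>R w"
      using e1 unfolding Cmv by (simp add: eq_neg_iff_add_eq_0 algebra_simps)
    have "u = 0 \<and> t = 0"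
    proof (cases "w = 0")
      case True
      then show ?thesis using uw e2 \<beta>0_def by simp
    next
      case False
      then have b0: "\<beta>0 = 0" unfolding \<beta>0_def by simp
      have "inner w u = (- (x * inner w u + t)) * inner w w" using uw
        by (metis inner_scaleR_right)
      with e2 b0 False have "- (x * inner w u + t) = 0" by simp
      with uw have u0: "u = 0" by simp
      with e1 False have "t = 0" by simp
      with u0 show ?thesis by simp
    qed
    then show "u' = 0"
      unfolding u_def t_def vec_eq_iff by (metis (full_types) old.sum.exhaust old.unit.exhaust zero_index vec_lambda_beta)
  qed
  then have "\<exists>B. B ** N0 = mat 1" using matrix_left_invertible_ker by blast
  then have d: "det N0 \<noteq> 0" using invertible_left_inverse invertible_det_nz by blast
  define d0 where "d0 = det N0"
  have "block_mat (Cmat w \<alpha>) w ((1/d0) *\<^sub>R w) (\<beta>0/d0) = (\<chi> r. if r = Inr () then (1/d0) *s N0$r else N0$r)"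
    unfolding N0_def block_mat_def
    by (simp add: vec_eq_iff split: sum.split)
  then have "det (block_mat (Cmat w \<alpha>) w ((1/d0) *\<^sub>R w) (\<beta>0/d0)) = (1/d0) * det (\<chi> r. if r = Inr () then N0$r else N0$r)"
    by (simp add: det_row_mul)
  also have "\<dots> = 1" using d unfolding d0_def by simp
  finally show ?thesis by blast
qed

lemma key_identity2:
  fixes M F :: "real^'n::finite^'n" and b \<sigma> :: "real^'n"
  assumes sym: "transpose F = F" and Ms: "M *v \<sigma> = - b"
  shows "outer b (axis k 1) ** F ** transpose M + M ** (t *\<^sub>R F + outer \<sigma> (\<chi> i. F$i$k) + outer (\<chi> i. F$i$k) \<sigma>) ** transpose M
            + M ** F ** transpose (outer b (axis k 1)) = t *\<^sub>R (M ** F ** transpose M)"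
proof -
  let ?Fc = "\<chi> i. F$i$k"
  have e1: "outer b (axis k 1) ** F ** transpose M = outer b (M *v ?Fc)"
  proof -
    have "outer b (axis k 1) ** F = outer b (F *v axis k 1)"
      using outer_mult_left[of b "axis k 1" F] sym by simp
    then have "outer b (axis k 1) ** F ** transpose M = mat 1 ** outer b ?Fc ** transpose M"
      by (simp add: mv_axis)
    also have "\<dots> = outer b (M *v ?Fc)" by (rule trans[OF outer_mult], simp)
    finally show ?thesis .
  qed
  have e2: "M ** F ** transpose (outer b (axis k 1)) = outer (M *v ?Fc) b"
  proof -
    have "M ** F ** transpose (outer b (axis k 1)) = (M ** F) ** outer (axis k 1) b ** transpose (mat 1)"
      by (simp add: outer_transpose)
    also have "\<dots> = outer (M *v ?Fc) b"
    proof -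
      have "(\<chi> i. (M ** F)$i$k) = M *v ?Fc"
        by (simp add: vec_eq_iff matrix_matrix_mult_def matrix_vector_mult_def)
      then show ?thesis using outer_mult[of "M ** F" "axis k 1" b "mat 1"] by (simp add: mv_axis)
    qed
    finally show ?thesis .
  qed
  have e3: "M ** (t *\<^sub>R F + outer \<sigma> ?Fc + outer ?Fc \<sigma>) ** transpose M
      = t *\<^sub>R (M ** F ** transpose M) - outer b (M *v ?Fc) - outer (M *v ?Fc) b"
    by (simp add: madd_l madd_r mscale_l mscale_r outer_mult Ms outer_neg outer_neg2 algebra_simps)
  show ?thesis unfolding e1 e2 e3 by simp
qed

lemma scoef_diff:
  fixes F :: "real^'n::finite \<Rightarrow> real^'n^'n"
  assumes n2: "CARD('n) \<ge> 2" and U: "open U" and sm: "\<And>i j. smooth_on U (ent F i j)"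
    and iv: "\<And>p. p \<in> U \<Longrightarrow> invertible (F p)" and q: "q \<in> U"
  shows "s_coef F k differentiable (at q)" "c_coef F k differentiable (at q)"
proof -
  have Fi: "(\<lambda>q. matrix_inv (F q) $ i $ j) differentiable (at q)" for i j
    by (rule minv_diff[OF U q]) (use iv smooth_diff[OF sm q] in \<open>auto simp: ent_def\<close>)
  have pdd: "pd k' (ent F i j) differentiable (at q)" for k' i j
    using smooth_diff[OF smooth_pd[OF sm] q] .
  have n: "(real CARD('n) + 2) * (1 - real CARD('n)) \<noteq> 0" "(real CARD('n) + 2) * (real CARD('n) - 1) \<noteq> 0"
    using n2 by auto
  have es: "s_coef F k = (\<lambda>p. (\<Sum>i\<in>UNIV. \<Sum>j\<in>UNIV. matrix_inv (F p) $ i $ j *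
        (pd k (ent F i j) p - real CARD('n) * pd j (ent F i k) p)) / ((real CARD('n) + 2) * (1 - real CARD('n))))"
    by (rule ext) (simp add: s_coef_def Let_def)
  have "\<dots> differentiable (at q)"
    by (intro differentiable_divide differentiable_sum ballI differentiable_mult differentiable_diff
        differentiable_const Fi pdd n) simp_all
  then show "s_coef F k differentiable (at q)" unfolding es .
  have ec: "c_coef F k = (\<lambda>p. (\<Sum>i\<in>UNIV. \<Sum>j\<in>UNIV. matrix_inv (F p) $ i $ j *
        ((real CARD('n) + 3) * pd k (ent F i j) p - 2 * (real CARD('n) + 1) * pd j (ent F i k) p)) / ((real CARD('n) + 2) * (real CARD('n) - 1)))"
    by (rule ext) (simp add: c_coef_def Let_def)
  have "\<dots> differentiable (at q)"
    by (intro differentiable_divide differentiable_sum ballI differentiable_mult differentiable_diff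
        differentiable_const Fi pdd n) simp_all
  then show "c_coef F k differentiable (at q)" unfolding ec .
qed

lemma converse:
  fixes F :: "real^'n::finite \<Rightarrow> real^'n^'n" and U
  assumes n2: "CARD('n) \<ge> 2" and U: "open U" and sm: "\<And>i j. smooth_on U (ent F i j)"
    and sy: "\<And>p. p \<in> U \<Longrightarrow> transpose (F p) = F p"
    and iv: "\<And>p. p \<in> U \<Longrightarrow> invertible (F p)"
    and A: "\<forall>p\<in>U. \<forall>i j k. a_coef F i j k p = 0"
    and Fl: "\<forall>p\<in>U. \<forall>i j. pd j (s_coef F i) p - s_coef F i p * s_coef F j p = 0"
    and p0: "p0 \<in> U"
  shows "linearizable_at F U p0"
proof -
  define s where "s i q = s_coef F i q" for i q
  define \<gamma> where "\<gamma> k q = c_coef F k q + 2 * s_coef F k q" for k q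
  have sd: "s i differentiable (at q)" if "q \<in> U" for i q
    unfolding s_def[abs_def] using scoef_diff(1)[OF n2 U sm iv that] by simp
  have gd: "\<gamma> k differentiable (at q)" if "q \<in> U" for k q
    unfolding \<gamma>_def[abs_def] using scoef_diff[OF n2 U sm iv that]
    by (intro differentiable_add differentiable_mult differentiable_const) auto
  have Fdiff: "mdiff F q" if "q \<in> U" for q
    using sm smooth_diff[OF _ that] unfolding mdiff_def ent_def by blast
  have Dform: "pd k (ent F i j) q = \<gamma> k q * F q$i$j + s i q * F q$k$j + s j q * F q$k$i"
    if "q \<in> U" for q k i j
    using A that unfolding a_coef_def \<gamma>_def s_def by (auto simp: algebra_simps)
  obtain r0 where r0: "r0 > 0" "ball p0 r0 \<subseteq> U" using U p0 open_contains_ball by blast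
  obtain d1 where d1: "d1 > 0" "\<forall>q\<in>ball p0 d1. norm (\<chi> i. s i q) \<le> norm (\<chi> i. s i p0) + 1"
    using bound_near[of "\<lambda>q. \<chi> i. s i q" p0] sd[OF p0] by auto
  obtain d2 where d2: "d2 > 0" "\<forall>q\<in>ball p0 d2. norm (\<chi> k. \<gamma> k q) \<le> norm (\<chi> k. \<gamma> k p0) + 1"
    using bound_near[of "\<lambda>q. \<chi> k. \<gamma> k q" p0] gd[OF p0] by auto
  define s0 where "s0 = (\<chi> i. s i p0)"
  define w where "w = - s0"
  define \<alpha> where "\<alpha> = 1 + inner s0 p0"
  define r3 where "r3 = 1 / (2 * (norm s0 + 1))"
  define r where "r = min r0 (min d1 (min d2 r3))"
  have "0 < 2 * norm s0 + 2" using norm_ge_zero[of s0] by linarith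
  then have r3p: "r3 > 0" unfolding r3_def by simp
  have r: "r > 0" unfolding r_def using r0 d1 d2 r3p by simp
  define B where "B = ball p0 r"
  have BU: "B \<subseteq> U" unfolding B_def r_def using r0 by auto
  have p0B: "p0 \<in> B" unfolding B_def using r by simp
  have psi: "\<alpha> + inner w q = 1 - inner s0 (q - p0)" for q
    unfolding \<alpha>_def w_def by (simp add: inner_diff_right)
  have psipos: "\<alpha> + inner w q > 1/2" if "q \<in> B" for q
  proof -
    have "\<bar>inner s0 (q - p0)\<bar> \<le> norm s0 * norm (q - p0)" by (rule Cauchy_Schwarz_ineq2)
    also have "\<dots> \<le> norm s0 * r3"
    proof -
      have "norm (q - p0) < r" using that unfolding B_def by (simp add: dist_norm norm_minus_commute)
      then have "norm (q - p0) \<le> r3" unfolding r_def by linarith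
      then show ?thesis by (simp add: mult_left_mono)
    qed
    also have "\<dots> < 1/2"
    proof -
      have np: "norm s0 + 1 > 0" using norm_ge_zero[of s0] by linarith
      then show ?thesis unfolding r3_def by (simp add: field_simps)
    qed
    finally show ?thesis unfolding psi by linarith
  qed
  have r_sd: "\<And>q' i'. q' \<in> ball p0 r \<Longrightarrow> s i' differentiable (at q')"
    using sd BU B_def by blast
  have r_fl: "\<And>q' i' j. q' \<in> ball p0 r \<Longrightarrow> pd j (s i') q' = s i' q' * s j q'"
    using Fl BU B_def unfolding s_def by auto
  have r_bd: "\<And>q'. q' \<in> ball p0 r \<Longrightarrow> norm (\<chi> i. s i q') \<le> norm (\<chi> i. s i p0) + 1"
    using d1 unfolding r_def by auto
  note XX = riccati_unique[where s=s, OF r_sd r_fl r_bd]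
  have sB: "s i q = s0$i / (\<alpha> + inner w q)" if q: "q \<in> B" for i q
  proof -
    have "(1 - inner (\<chi> i. s i p0) (q - p0)) * s i q = s i p0"
      using XX q unfolding B_def by blast
    then show ?thesis using psipos[OF q] unfolding psi s0_def by (simp add: field_simps)
  qed
  define C where "C = Cmat w \<alpha>"
  define M where "M = Cbp C w"
  have dM: "det (M q) \<noteq> 0" if "q \<in> B" for q
    unfolding M_def C_def using Cmat_det psipos[OF that] by force
  have Minv: "invertible (M q)" if "q \<in> B" for q using dM[OF that] invertible_det_nz by blast
  have Ms: "M q *v (\<chi> i. s i q) = - w" if q: "q \<in> B" for q
  proof -
    have "(\<chi> i. s i q) = (- 1 / (\<alpha> + inner w q)) *\<^sub>R w"
      using sB[OF q] unfolding w_def by (simp add: vec_eq_iff)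
    then have "M q *v (\<chi> i. s i q) = (- 1 / (\<alpha> + inner w q)) *\<^sub>R (M q *v w)"
      by (simp only: matrix_vector_mult_scaleR)
    also have "\<dots> = (- 1 / (\<alpha> + inner w q)) *\<^sub>R ((\<alpha> + inner w q) *\<^sub>R w)"
      unfolding M_def C_def Cmat_w ..
    also have "\<dots> = - w" using psipos[OF q] by simp
    finally show ?thesis .
  qed
  define P where "P q = M q ** F q ** transpose (M q)" for q
  have Pdiff: "mdiff P q" if q: "q \<in> B" for q
    unfolding P_def M_def
    by (intro mdiff_mult mdiff_transpose Cbp_mdiff Fdiff) (use q BU in auto)
  have mpdP: "mpd k P q = \<gamma> k q *\<^sub>R P q" if q: "q \<in> B" for q k
  proof -
    have qU: "q \<in> U" using q BU by blast
    have mpdP1: "mpd k P q = outer w (axis k 1) ** F q ** transpose (M q) + M q ** mpd k F q ** transpose (M q)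
            + M q ** F q ** transpose (outer w (axis k 1))"
    proof -
      have "mpd k P q = mpd k (\<lambda>q. M q ** F q) q ** transpose (M q) + (M q ** F q) ** mpd k (\<lambda>q. transpose (M q)) q"
        unfolding P_def
        by (rule mpd_mult) (use Fdiff[OF qU] Cbp_mdiff M_def in \<open>auto intro: mdiff_mult mdiff_transpose\<close>)
      also have "mpd k (\<lambda>q. M q ** F q) q = mpd k M q ** F q + M q ** mpd k F q"
        by (rule mpd_mult) (use Fdiff[OF qU] Cbp_mdiff M_def in auto)
      finally show ?thesis
        by (simp add: mpd_transpose M_def Cbp_mpd madd_r matrix_mul_assoc)
    qed
    have sy': "F q $ i' $ j' = F q $ j' $ i'" for i' j'
      using sy[OF qU] by (metis transpose_def vec_lambda_beta)
    have Dk: "mpd k F q = \<gamma> k q *\<^sub>R F q + outer (\<chi> i. s i q) (\<chi> i. F q$i$k) + outer (\<chi> i. F q$i$k) (\<chi> i. s i q)"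
      unfolding mpd_def outer_def using Dform[OF qU] sy'
      by (simp add: vec_eq_iff ent_eta mult.commute)
    show ?thesis
      unfolding mpdP1 Dk P_def by (rule key_identity2[OF sy[OF qU] Ms[OF q]])
  qed
  have Pinv: "invertible (P p0)" unfolding P_def using inv_prod3 Minv[OF p0B] iv[OF p0] by blast
  then have "P p0 \<noteq> 0" by (rule inv_ne0)
  then obtain a b' where Pab: "P p0 $ a $ b' \<noteq> 0" by (metis vec_eq_iff zero_index)
  have Pprop: "P q = (P q $ a $ b' / P p0 $ a $ b') *\<^sub>R P p0" if q: "q \<in> B" for q
  proof -
    have "P q $ i $ j * P p0 $ a $ b' - P q $ a $ b' * P p0 $ i $ j = 0" for i j
    proof -
      define h where "h q = P q $ i $ j * P p0 $ a $ b' - P q $ a $ b' * P p0 $ i $ j" for q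
      have h_d: "\<And>q'. q' \<in> ball p0 r \<Longrightarrow> h differentiable (at q')"
      proof -
        fix q' assume q': "q' \<in> ball p0 r"
        then have q'B: "q' \<in> B" unfolding B_def .
        have d: "(\<lambda>q. P q $ i' $ j') differentiable (at q')" for i' j' using Pdiff[OF q'B] unfolding mdiff_def by blast
        show "h differentiable (at q')" unfolding h_def[abs_def]
          using d by (intro differentiable_diff differentiable_mult differentiable_const) auto
      qed
      have h_pd: "\<And>q' k. q' \<in> ball p0 r \<Longrightarrow> pd k h q' = \<gamma> k q' * h q'"
      proof -
        fix q' k assume q': "q' \<in> ball p0 r"
        then have q'B: "q' \<in> B" unfolding B_def .
        have d: "(\<lambda>q. P q $ i' $ j') differentiable (at q')" for i' j' using Pdiff[OF q'B] unfolding mdiff_def by blast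
        have pe: "pd k (\<lambda>q. P q $ i' $ j') q' = \<gamma> k q' * P q' $ i' $ j'" for i' j'
          using arg_cong[OF mpdP[OF q'B, of k], of "\<lambda>X. X $ i' $ j'"] unfolding mpd_def by simp
        have "pd k h q' = pd k (\<lambda>q. P p0 $ a $ b' * P q $ i $ j) q' - pd k (\<lambda>q. P p0 $ i $ j * P q $ a $ b') q'"
          unfolding h_def[abs_def] using d by (subst pd_diff[symmetric]) (auto simp: mult.commute intro: differentiable_mult)
        also have "\<dots> = P p0 $ a $ b' * pd k (\<lambda>q. P q $ i $ j) q' - P p0 $ i $ j * pd k (\<lambda>q. P q $ a $ b') q'"
          using d by (simp add: pd_cmult)
        finally show "pd k h q' = \<gamma> k q' * h q'" unfolding h_def by (simp add: pe algebra_simps)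
      qed
      have h_bd: "\<And>q'. q' \<in> ball p0 r \<Longrightarrow> norm (\<chi> k. \<gamma> k q') \<le> norm (\<chi> k. \<gamma> k p0) + 1"
        using d2 unfolding r_def by auto
      have h0: "h p0 = 0" unfolding h_def by simp
      note YY = prop_unique[where h=h and \<gamma>=\<gamma>, OF h_d h_pd h_bd h0]
      have "h q = 0" using YY q unfolding B_def by blast
      then show ?thesis unfolding h_def .
    qed
    then show ?thesis using Pab by (simp add: vec_eq_iff field_simps)
  qed
  obtain c \<beta> where cb: "det (block_mat C w c \<beta>) = 1" unfolding C_def using block_det_exists by blast
  show ?thesis
    unfolding linearizable_at_def
  proof (intro exI conjI ballI)
    show "open B" unfolding B_def by simp
    show "p0 \<in> B" by (rule p0B)
    show "B \<subseteq> U" by (rule BU)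
    show "det (block_mat C w c \<beta>) = 1" by (rule cb)
    fix q assume q: "q \<in> B"
    show "det (Cbp C w q) \<noteq> 0" using dM[OF q] unfolding M_def .
    show "transformed_coef C w F q = (det (M q) * (P q $ a $ b' / P p0 $ a $ b')) *\<^sub>R P p0"
    proof -
      have "transformed_coef C w F q = det (M q) *\<^sub>R P q"
        unfolding transformed_coef_def P_def M_def ..
      also have "\<dots> = det (M q) *\<^sub>R ((P q $ a $ b' / P p0 $ a $ b') *\<^sub>R P p0)"
        by (rule arg_cong[OF Pprop[OF q]])
      also have "\<dots> = (det (M q) * (P q $ a $ b' / P p0 $ a $ b')) *\<^sub>R P p0" by simp
      finally show ?thesis .
    qed
  qed
qed

theorem proposition1:
  fixes F :: "real^'n::finite \<Rightarrow> real^'n^'n" and U :: "(real^'n) set"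
  assumes "CARD('n) \<ge> 2"
    and "open U"
    and "\<And>i j. smooth_on U (ent F i j)"
    and "\<And>p. p \<in> U \<Longrightarrow> transpose (F p) = F p"
    and "\<And>p. p \<in> U \<Longrightarrow> invertible (F p)"
  shows "(\<forall>p0\<in>U. linearizable_at F U p0) \<longleftrightarrow>
           ((\<forall>p\<in>U. \<forall>i j k. a_coef F i j k p = 0) \<and>
            (\<forall>p\<in>U. \<forall>i j. pd j (s_coef F i) p - s_coef F i p * s_coef F j p = 0))"
proof
  assume L: "\<forall>p0\<in>U. linearizable_at F U p0"
  have "(\<forall>i j k. a_coef F i j k p = 0) \<and>
         (\<forall>i j. pd j (s_coef F i) p - s_coef F i p * s_coef F j p = 0)" if "p \<in> U" for p
    using forward[OF assms(1,3,4,5)] L that by blast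
  then show "(\<forall>p\<in>U. \<forall>i j k. a_coef F i j k p = 0) \<and>
            (\<forall>p\<in>U. \<forall>i j. pd j (s_coef F i) p - s_coef F i p * s_coef F j p = 0)" by blast
next
  assume R: "(\<forall>p\<in>U. \<forall>i j k. a_coef F i j k p = 0) \<and>
            (\<forall>p\<in>U. \<forall>i j. pd j (s_coef F i) p - s_coef F i p * s_coef F j p = 0)"
  show "\<forall>p0\<in>U. linearizable_at F U p0"
    using converse[OF assms(1,2,3,4,5)] R by blast
qed

end
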